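(* Assume the standing setup. If $\lambda_1(\boldsymbol\Omega_K)\le1$ then $\mathbf g(1)=\mathbf 1_K$; if $\lambda_1(\boldsymbol\Omega_K)>1$ then $\mathbf g(1)\neq\mathbf 1_K$.
   Context: Standing setup: $K\ge1$, $\boldsymbol\rho=(\rho_k)$ with $\rho_k\in(0,1)$, $\sum\rho_k=1$; $\mathbf S_K=(s_{kl})$ symmetric with $s_{kl}>0$; $\mathbf D_{\mathbf v}$ diagonal with diagonal $\mathbf v$; $\boldsymbol\Omega_K=\mathbf D_{\boldsymbol\rho^{\odot1/2}}\mathbf S_K\mathbf D_{\boldsymbol\rho^{\odot1/2}}$, $\boldsymbol\Gamma_K=\mathbf S_K\mathbf D_{\boldsymbol\rho}$; $\lambda_1$ = largest eigenvalue. For each $N$, $[N]$ is split into consecutive blocks $B_1,\dots,B_K$ with $|B_k|/N\to\rho_k$; $\Sigma_{ij}=s_{kl}$ for $i\in B_k,j\in B_l$; $\mathbf H$ is symmetric with independent standard Gaussian entries on/above the diagonal; $\mathbf X=\mathbf H\odot\boldsymbol\Sigma^{\odot1/2}-N^{-1/2}\mathrm{Diag}(\boldsymbol\Sigma\mathbf 1)$ ($\odot$ Hadamard product); $\mu_X$ is the a.s. limiting spectral distribution of $\mathbf X/\sqrt N$. QVE: for $z\in\mathbb H_-=\{\Im z<0\}$, $\mathbf g(z)$ is the unique solution in $(\mathbb H_+)^K$ of $\mathbf 1_K=z\mathbf g-\mathbf g\odot\boldsymbol\Gamma_K(\mathbf g-\mathbf 1_K)$, with $\sum_k\rho_kg_k(z)=\int(z-\lambda)^{-1}d\mu_X(\lambda)$;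 $\mathbf g$ extends continuously to $\mathbb H_-\cup\mathbb R$ (analytically off $\mathrm{Supp}(\mu_X)$) and $\mathbf g(1)$ denotes the value of this extension at $z=1$. *)

theory Defs
  imports "HOL-Analysis.Analysis"
begin

definition diag_mat :: "'a::zero ^ 'k \<Rightarrow> 'a ^ 'k ^ 'k" where
  "diag_mat v = (\<chi> i j. if i = j then v $ i else 0)"

definition vec_sqrt :: "real ^ 'k \<Rightarrow> real ^ 'k" where
  "vec_sqrt v = (\<chi> i. sqrt (v $ i))"

definition Omega_K :: "real ^ 'k ^ 'k \<Rightarrow> real ^ 'k \<Rightarrow> real ^ 'k ^ 'k" where
  "Omega_K S \<rho> = diag_mat (vec_sqrt \<rho>) ** S ** diag_mat (vec_sqrt \<rho>)"

definition Gamma_K :: "real ^ 'k ^ 'k \<Rightarrow> real ^ 'k \<Rightarrow> real ^ 'k ^ 'k" where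
  "Gamma_K S \<rho> = S ** diag_mat \<rho>"

definition eigenvalues :: "real ^ 'k ^ 'k \<Rightarrow> real set" where
  "eigenvalues A = {l. \<exists>v. v \<noteq> 0 \<and> A *v v = l *s v}"

definition largest_eigenvalue :: "real ^ 'k ^ 'k \<Rightarrow> real" where
  "largest_eigenvalue A = Max (eigenvalues A)"

definition cmat :: "real ^ 'k ^ 'k \<Rightarrow> complex ^ 'k ^ 'k" where
  "cmat A = (\<chi> i j. complex_of_real (A $ i $ j))"

text \<open>The QVE  1_K = z g - g \<odot> Gamma_K (g - 1_K)  (\<odot> is componentwise product).\<close>
definition QVE :: "real ^ 'k ^ 'k \<Rightarrow> real ^ 'k \<Rightarrow> complex \<Rightarrow> complex ^ 'k \<Rightarrow> bool" where
  "QVE S \<rho> z g \<longleftrightarrow> (1::complex ^ 'k) = z *s g - g * (cmat (Gamma_K S \<rho>) *v (g - 1))"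

end

theory Submission
  imports Defs
begin


lemma symm_dot:
  fixes A :: "real^'n^'n"
  assumes "\<And>i j. A$i$j = A$j$i"
  shows "(A *v x) \<bullet> y = x \<bullet> (A *v y)"
proof -
  have "(A *v x) \<bullet> y = (\<Sum>i\<in>UNIV. \<Sum>j\<in>UNIV. A$i$j * x$j * y$i)"
    unfolding inner_vec_def matrix_vector_mult_def by (simp add: sum_distrib_right)
  also have "\<dots> = (\<Sum>j\<in>UNIV. \<Sum>i\<in>UNIV. A$i$j * x$j * y$i)" by (rule sum.swap)
  also have "\<dots> = (\<Sum>j\<in>UNIV. \<Sum>i\<in>UNIV. x$j * (A$j$i * y$i))"
  proof (intro sum.cong refl)
    fix j i show "A$i$j * x$j * y$i = x$j * (A$j$i * y$i)" using assms[of i j] by (simp add: mult_ac)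
  qed
  also have "\<dots> = x \<bullet> (A *v y)"
    unfolding inner_vec_def matrix_vector_mult_def
    by (simp add: sum_distrib_left)
  finally show ?thesis .
qed

lemma quad_sum:
  fixes A :: "real^'n^'n"
  shows "x \<bullet> (A *v x) = (\<Sum>i\<in>UNIV. \<Sum>j\<in>UNIV. A$i$j * x$i * x$j)"
  unfolding inner_vec_def matrix_vector_mult_def by (simp add: sum_distrib_left mult_ac)

lemma quad_bound:
  fixes A :: "real^'n^'n"
  assumes x: "norm x = 1" and mx: "\<forall>y. norm y = 1 \<longrightarrow> y \<bullet> (A *v y) \<le> x \<bullet> (A *v x)"
  shows "y \<bullet> (A *v y) \<le> (x \<bullet> (A *v x)) * (y \<bullet> y)"
proof (cases "y = 0")
  case True then show ?thesis by simp
next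
  case False
  define c where "c = norm y"
  have c: "c > 0" using False c_def by simp
  have "norm ((1/c) *\<^sub>R y) = 1" using c c_def by simp
  then have "((1/c) *\<^sub>R y) \<bullet> (A *v ((1/c) *\<^sub>R y)) \<le> x \<bullet> (A *v x)" using mx by blast
  moreover have "((1/c) *\<^sub>R y) \<bullet> (A *v ((1/c) *\<^sub>R y)) = (y \<bullet> (A *v y)) / c^2"
    by (simp del: matrix_scaleR_vector_ac add: matrix_vector_mult_scaleR power2_eq_square)
  moreover have "y \<bullet> y = c^2" using c_def by (simp add: dot_square_norm)
  ultimately have "(y \<bullet> (A *v y)) / c^2 \<le> x \<bullet> (A *v x)" by linarith
  then show ?thesis using c \<open>y \<bullet> y = c^2\<close> by (simp add: divide_le_eq mult_ac)
qed

lemma max_is_eig: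
  fixes A :: "real^'n^'n"
  assumes sym: "\<And>i j. A$i$j = A$j$i"
    and x: "norm x = 1" and mx: "\<forall>y. norm y = 1 \<longrightarrow> y \<bullet> (A *v y) \<le> x \<bullet> (A *v x)"
  shows "A *v x = (x \<bullet> (A *v x)) *\<^sub>R x"
proof -
  define \<mu> where "\<mu> = x \<bullet> (A *v x)"
  define r where "r = A *v x - \<mu> *\<^sub>R x"
  have xx: "x \<bullet> x = 1" using x by (simp add: dot_square_norm)
  have rAx: "r \<bullet> (A *v x) - \<mu> * (x \<bullet> r) = r \<bullet> r"
    unfolding r_def by (simp add: inner_diff_left inner_diff_right \<mu>_def inner_commute algebra_simps)
  have key: "2*t*(r \<bullet> r) + t^2 * (r \<bullet> (A *v r) - \<mu> * (r \<bullet> r)) \<le> 0" for t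
  proof -
    have "(x + t *\<^sub>R r) \<bullet> (A *v (x + t *\<^sub>R r)) \<le> \<mu> * ((x + t *\<^sub>R r) \<bullet> (x + t *\<^sub>R r))"
      using quad_bound[OF x mx] \<mu>_def by blast
    moreover have "(x + t *\<^sub>R r) \<bullet> (A *v (x + t *\<^sub>R r)) = \<mu> + 2*t*(r \<bullet> (A *v x)) + t^2 * (r \<bullet> (A *v r))"
      using symm_dot[OF sym, of r x]
      by (simp del: matrix_scaleR_vector_ac add: matrix_vector_right_distrib matrix_vector_mult_scaleR inner_add_left inner_add_right
          \<mu>_def inner_commute power2_eq_square algebra_simps)
    moreover have "(x + t *\<^sub>R r) \<bullet> (x + t *\<^sub>R r) = 1 + 2*t*(x \<bullet> r) + t^2*(r \<bullet> r)"
      using xx by (simp add: inner_add_left inner_add_right inner_commute power2_eq_square algebra_simps)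
    ultimately have "\<mu> + 2*t*(r \<bullet> (A *v x)) + t^2 * (r \<bullet> (A *v r)) \<le> \<mu> * (1 + 2*t*(x \<bullet> r) + t^2*(r \<bullet> r))" by simp
    then have "\<mu> + 2*t*(r \<bullet> r + \<mu> * (x \<bullet> r)) + t^2 * (r \<bullet> (A *v r)) \<le> \<mu> * (1 + 2*t*(x \<bullet> r) + t^2*(r \<bullet> r))"
      using rAx by (simp add: algebra_simps)
    then show ?thesis by (simp add: algebra_simps)
  qed
  define D where "D = \<mu> * (r \<bullet> r) - r \<bullet> (A *v r)"
  have D: "D \<ge> 0" using quad_bound[OF x mx, of r] unfolding D_def \<mu>_def by simp
  have "r \<bullet> r = 0"
  proof (rule ccontr)
    assume "r \<bullet> r \<noteq> 0"
    then have p: "r \<bullet> r > 0" by (simp add: order_le_neq_trans)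
    define t where "t = (r \<bullet> r) / (D + 1)"
    have t: "t > 0" using p D t_def by simp
    have "2*t*(r \<bullet> r) \<le> t^2 * D" using key[of t] unfolding D_def by (simp add: algebra_simps)
    then have "2*(r \<bullet> r) \<le> t * D" using t by (simp add: power2_eq_square)
    also have "\<dots> < (r \<bullet> r)" unfolding t_def using p D by (simp add: field_simps)
    finally show False using p by simp
  qed
  then have "r = 0" by simp
  then show ?thesis unfolding r_def \<mu>_def by simp
qed

lemma eig_le_max:
  fixes A :: "real^'n^'n"
  assumes x: "norm x = 1" and mx: "\<forall>y. norm y = 1 \<longrightarrow> y \<bullet> (A *v y) \<le> x \<bullet> (A *v x)"
    and l: "l \<in> eigenvalues A"
  shows "l \<le> x \<bullet> (A *v x)"
proof -
  obtain v where v: "v \<noteq> 0" "A *v v = l *s v" using l unfolding eigenvalues_def by blast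
  have "v \<bullet> (A *v v) = l * (v \<bullet> v)" using v by (simp add: scalar_mult_eq_scaleR)
  moreover have "v \<bullet> (A *v v) \<le> (x \<bullet> (A *v x)) * (v \<bullet> v)" by (rule quad_bound[OF x mx])
  moreover have "v \<bullet> v > 0" using v by simp
  ultimately show ?thesis by (metis mult_le_cancel_right_pos)
qed

lemma eigenvalues_finite:
  fixes A :: "real^'n^'n"
  assumes sym: "\<And>i j. A$i$j = A$j$i"
  shows "finite (eigenvalues A)"
proof -
  define ev where "ev l = (SOME v. v \<noteq> 0 \<and> A *v v = l *s v)" for l
  have ev: "ev l \<noteq> 0 \<and> A *v ev l = l *s ev l" if "l \<in> eigenvalues A" for l
  proof -
    have "\<exists>v. v \<noteq> 0 \<and> A *v v = l *s v" using that unfolding eigenvalues_def by simp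
    then show ?thesis unfolding ev_def by (rule someI_ex)
  qed
  have inj: "inj_on ev (eigenvalues A)"
  proof (rule inj_onI)
    fix l l' assume l: "l \<in> eigenvalues A" and l': "l' \<in> eigenvalues A" and e: "ev l = ev l'"
    have "l *s ev l = A *v ev l" using conjunct2[OF ev[OF l]] by (rule HOL.sym)
    also have "\<dots> = A *v ev l'" by (simp only: e)
    also have "\<dots> = l' *s ev l'" using conjunct2[OF ev[OF l']] .
    also have "\<dots> = l' *s ev l" by (simp only: e)
    finally have "l *s ev l = l' *s ev l" .
    then have "l *\<^sub>R ev l = l' *\<^sub>R ev l" by (simp only: scalar_mult_eq_scaleR)
    then show "l = l'" using ev[OF l] scaleR_cancel_right by blast
  qed
  have "pairwise orthogonal (ev ` eigenvalues A)"
    unfolding pairwise_def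
  proof (intro ballI impI)
    fix u w assume u: "u \<in> ev ` eigenvalues A" and w: "w \<in> ev ` eigenvalues A" and ne: "u \<noteq> w"
    obtain l where l: "l \<in> eigenvalues A" "u = ev l" using u by blast
    obtain l' where l': "l' \<in> eigenvalues A" "w = ev l'" using w by blast
    have "l \<noteq> l'" using ne l l' by blast
    have "(A *v ev l) \<bullet> ev l' = ev l \<bullet> (A *v ev l')" by (rule symm_dot[OF sym])
    moreover have "A *v ev l = l *\<^sub>R ev l" using ev[OF l(1)] by (simp add: scalar_mult_eq_scaleR)
    moreover have "A *v ev l' = l' *\<^sub>R ev l'" using ev[OF l'(1)] by (simp add: scalar_mult_eq_scaleR)
    ultimately have "l * (ev l \<bullet> ev l') = l' * (ev l \<bullet> ev l')" by simp
    then have "ev l \<bullet> ev l' = 0" using \<open>l \<noteq> l'\<close> by simp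
    then show "orthogonal u w" using l l' unfolding orthogonal_def by simp
  qed
  moreover have "0 \<notin> ev ` eigenvalues A"
  proof
    assume "0 \<in> ev ` eigenvalues A"
    then obtain l where "l \<in> eigenvalues A" "0 = ev l" by blast
    then show False using ev by metis
  qed
  ultimately have "independent (ev ` eigenvalues A)" by (rule pairwise_orthogonal_independent)
  then have "finite (ev ` eigenvalues A)" by (rule finiteI_independent)
  then show ?thesis using inj finite_imageD by blast
qed

lemma sym_pos_top_eig:
  fixes A :: "real^'n^'n"
  assumes sym: "\<And>i j. A$i$j = A$j$i" and pos: "\<And>i j. 0 < A$i$j"
  shows "\<exists>e. e \<noteq> 0 \<and> (\<forall>i. 0 \<le> e$i) \<and> A *v e = largest_eigenvalue A *s e"
proof -
  have cont: "continuous_on (sphere 0 1) (\<lambda>x::real^'n. x \<bullet> (A *v x))"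
    unfolding quad_sum by (intro continuous_intros)
  obtain x where xs: "x \<in> sphere 0 1" and xm: "\<forall>y\<in>sphere 0 1. y \<bullet> (A *v y) \<le> x \<bullet> (A *v x)"
    using continuous_attains_sup[OF compact_sphere _ cont] by auto
  have x: "norm x = 1" using xs by simp
  have mx: "\<forall>y. norm y = 1 \<longrightarrow> y \<bullet> (A *v y) \<le> x \<bullet> (A *v x)" using xm by simp
  define x1 where "x1 = (\<chi> i. \<bar>x$i\<bar>)"
  have x1: "norm x1 = 1" using x unfolding x1_def norm_vec_def by simp
  have "x \<bullet> (A *v x) \<le> x1 \<bullet> (A *v x1)"
    unfolding quad_sum x1_def
  proof (intro sum_mono)
    fix i j
    have "A$i$j * x$i * x$j \<le> A$i$j * (\<bar>x$i\<bar> * \<bar>x$j\<bar>)"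
      using pos[of i j] by (simp add: mult.assoc abs_mult[symmetric] mult_left_mono)
    then show "A$i$j * x$i * x$j \<le> A$i$j * (\<chi> i. \<bar>x$i\<bar>)$i * (\<chi> i. \<bar>x$i\<bar>)$j" by (simp add: mult.assoc)
  qed
  moreover have "x1 \<bullet> (A *v x1) \<le> x \<bullet> (A *v x)" using mx x1 by blast
  ultimately have eqv: "x1 \<bullet> (A *v x1) = x \<bullet> (A *v x)" by linarith
  have mx1: "\<forall>y. norm y = 1 \<longrightarrow> y \<bullet> (A *v y) \<le> x1 \<bullet> (A *v x1)" using mx eqv by simp
  have eig: "A *v x1 = (x1 \<bullet> (A *v x1)) *\<^sub>R x1" by (rule max_is_eig[OF sym x1 mx1])
  have mem: "x1 \<bullet> (A *v x1) \<in> eigenvalues A"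
  proof -
    have "x1 \<noteq> 0" using x1 by auto
    then show ?thesis unfolding eigenvalues_def scalar_mult_eq_scaleR using eig by blast
  qed
  have LL: "largest_eigenvalue A = x1 \<bullet> (A *v x1)"
    unfolding largest_eigenvalue_def
    by (rule Max_eqI[OF eigenvalues_finite[OF sym] eig_le_max[OF x1 mx1] mem])
  have "x1 \<noteq> 0" using x1 by auto
  moreover have "\<forall>i. 0 \<le> x1$i" unfolding x1_def by simp
  moreover have "A *v x1 = largest_eigenvalue A *s x1" using eig LL by (simp add: scalar_mult_eq_scaleR)
  ultimately show ?thesis by blast
qed



lemma ifm1: "(if P then a else (0::real)) * b = (if P then a * b else 0)" by simp
lemma ifm2: "b * (if P then a else (0::real)) = (if P then b * a else 0)" by simp

lemma gamma_entry: "Gamma_K S \<rho> $ k $ l = S$k$l * \<rho>$l"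
  unfolding Gamma_K_def matrix_matrix_mult_def diag_mat_def
  by (simp add: ifm1 ifm2)

lemma omega_entry: "Omega_K S \<rho> $ i $ j = sqrt (\<rho>$i) * S$i$j * sqrt (\<rho>$j)"
  unfolding Omega_K_def matrix_matrix_mult_def diag_mat_def vec_sqrt_def
  by (simp add: ifm1 ifm2)

lemma QVE_comp:
  assumes "QVE S \<rho> z g"
  shows "1 = z * g$k - g$k * (\<Sum>l\<in>UNIV. complex_of_real (S$k$l * \<rho>$l) * (g$l - 1))"
proof -
  have "(1::complex^'a) $ k = (z *s g - g * (cmat (Gamma_K S \<rho>) *v (g - 1))) $ k"
    using assms unfolding QVE_def by simp
  then show ?thesis
    by (simp add: cmat_def gamma_entry matrix_vector_mult_def)
qed

lemma rowsum_eig: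
  fixes Gm :: "'k::finite \<Rightarrow> 'k \<Rightarrow> real" and f v G :: "'k \<Rightarrow> real"
  assumes Gnn: "\<forall>k l. 0 \<le> Gm k l" and vpos: "\<forall>k. 0 < v k" and Gpos: "\<forall>k. 0 < G k"
    and sub: "\<forall>k. (\<Sum>l\<in>UNIV. Gm k l * v l) \<le> v k / (G k)^2"
    and fnz: "f l0 \<noteq> 0" and eig: "\<forall>k. (\<Sum>l\<in>UNIV. Gm k l * f l) = \<mu> * f k"
  shows "\<exists>k. \<bar>\<mu>\<bar> * (G k)^2 \<le> 1"
proof -
  define m where "m = Max (range (\<lambda>l. \<bar>f l\<bar> / v l))"
  have fin: "finite (range (\<lambda>l. \<bar>f l\<bar> / v l))" by simp
  have "m \<in> range (\<lambda>l. \<bar>f l\<bar> / v l)" using Max_in[OF fin] unfolding m_def by auto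
  then obtain k where k: "m = \<bar>f k\<bar> / v k" by blast
  have mge: "\<bar>f l\<bar> / v l \<le> m" for l unfolding m_def using fin by (intro Max_ge) auto
  have fl: "\<bar>f l\<bar> \<le> m * v l" for l using mge[of l] vpos by (simp add: divide_le_eq)
  have "0 < \<bar>f l0\<bar> / v l0" using fnz vpos by simp
  then have mpos: "0 < m" using mge[of l0] by linarith
  have fk: "0 < \<bar>f k\<bar>" using mpos k vpos by (simp add: zero_less_divide_iff)
  have "\<bar>\<mu>\<bar> * \<bar>f k\<bar> = \<bar>\<Sum>l\<in>UNIV. Gm k l * f l\<bar>" using eig by (simp add: abs_mult)
  also have "\<dots> \<le> (\<Sum>l\<in>UNIV. \<bar>Gm k l * f l\<bar>)" by (rule sum_abs)
  also have "\<dots> \<le> (\<Sum>l\<in>UNIV. Gm k l * (m * v l))"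
    by (intro sum_mono) (simp add: abs_mult Gnn mult_left_mono fl)
  also have "\<dots> = m * (\<Sum>l\<in>UNIV. Gm k l * v l)" by (simp add: sum_distrib_left mult_ac)
  also have "\<dots> \<le> m * (v k / (G k)^2)" using sub mpos by (intro mult_left_mono) auto
  also have "\<dots> = \<bar>f k\<bar> / (G k)^2" using k vpos[rule_format, of k] by (simp add: field_simps)
  finally have "\<bar>\<mu>\<bar> * \<bar>f k\<bar> \<le> \<bar>f k\<bar> / (G k)^2" .
  then have "\<bar>\<mu>\<bar> * (G k)^2 * \<bar>f k\<bar> \<le> \<bar>f k\<bar>" using Gpos[rule_format, of k] by (simp add: field_simps)
  then have "\<bar>\<mu>\<bar> * (G k)^2 \<le> 1" using fk by simp
  then show ?thesis by blast
qed



lemma sqrt_cs: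
  fixes Gm a b :: "'k::finite \<Rightarrow> real"
  assumes "\<forall>l. 0 \<le> Gm l" "\<forall>l. 0 \<le> a l" "\<forall>l. 0 \<le> b l"
  shows "(\<Sum>l\<in>UNIV. Gm l * sqrt (a l * b l)) \<le> sqrt (\<Sum>l\<in>UNIV. Gm l * a l) * sqrt (\<Sum>l\<in>UNIV. Gm l * b l)"
proof -
  have eq: "Gm l * sqrt (a l * b l) = sqrt (Gm l * a l) * sqrt (Gm l * b l)" for l
    using assms by (simp add: real_sqrt_mult[symmetric] mult_ac)
       (metis mult.assoc mult.left_commute power2_eq_square real_sqrt_abs real_sqrt_mult abs_of_nonneg)
  have "(\<Sum>l\<in>UNIV. Gm l * sqrt (a l * b l))^2 \<le> (\<Sum>l\<in>UNIV. (sqrt (Gm l * a l))^2) * (\<Sum>l\<in>UNIV. (sqrt (Gm l * b l))^2)"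
    unfolding eq by (rule Cauchy_Schwarz_ineq_sum)
  also have "\<dots> = (\<Sum>l\<in>UNIV. Gm l * a l) * (\<Sum>l\<in>UNIV. Gm l * b l)"
    using assms by simp
  finally have "(\<Sum>l\<in>UNIV. Gm l * sqrt (a l * b l))^2 \<le> (\<Sum>l\<in>UNIV. Gm l * a l) * (\<Sum>l\<in>UNIV. Gm l * b l)" .
  then have "(\<Sum>l\<in>UNIV. Gm l * sqrt (a l * b l)) \<le> sqrt ((\<Sum>l\<in>UNIV. Gm l * a l) * (\<Sum>l\<in>UNIV. Gm l * b l))"
    by (rule real_le_rsqrt)
  then show ?thesis by (simp add: real_sqrt_mult)
qed

lemma rowsum_real:
  fixes Gm :: "'k::finite \<Rightarrow> 'k \<Rightarrow> real" and \<psi> v G H :: "'k \<Rightarrow> real" and \<eta> :: real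
  assumes Gnn: "\<forall>k l. 0 \<le> Gm k l" and psi: "\<forall>k. 0 < \<psi> k"
    and psub: "\<forall>k. (\<Sum>l\<in>UNIV. Gm k l * \<psi> l) \<le> \<psi> k"
    and vpos: "\<forall>k. 0 < v k" and Gpos: "\<forall>k. 0 < G k" and eta: "0 < \<eta>"
    and veq: "\<forall>k. v k / (G k)^2 = \<eta> + (\<Sum>l\<in>UNIV. Gm k l * v l)"
    and Hnn: "\<forall>k. 0 \<le> H k" and Hle: "\<forall>k. H k \<le> G k * (\<eta> + (\<Sum>l\<in>UNIV. Gm k l * H l))"
  shows "H l \<le> (\<Sum>k\<in>UNIV. 2 * sqrt (v k / \<psi> k) / G k) * sqrt (v l * \<psi> l)"
proof -
  define u where "u l = sqrt (v l * \<psi> l)" for l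
  have upos: "0 < u l" for l unfolding u_def using vpos psi by simp
  define m where "m = Max (range (\<lambda>l. H l / u l))"
  have fin: "finite (range (\<lambda>l. H l / u l))" by simp
  have "m \<in> range (\<lambda>l. H l / u l)" using Max_in[OF fin] unfolding m_def by auto
  then obtain k where k: "m = H k / u k" by blast
  have mge: "H l / u l \<le> m" for l unfolding m_def using fin by (intro Max_ge) auto
  have Hl: "H l \<le> m * u l" for l using mge[of l] upos[of l] by (simp add: divide_le_eq)
  have m0: "0 \<le> m" using k Hnn upos[of k] by simp
  define A where "A = (\<Sum>l\<in>UNIV. Gm k l * v l)"
  define B where "B = (\<Sum>l\<in>UNIV. Gm k l * \<psi> l)"
  have A0: "0 \<le> A" unfolding A_def using Gnn vpos by (intro sum_nonneg) (simp add: less_imp_le)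
  have B0: "0 \<le> B" unfolding B_def using Gnn psi by (intro sum_nonneg) (simp add: less_imp_le)
  have Bp: "B \<le> \<psi> k" using psub B_def by simp
  have cs: "(\<Sum>l\<in>UNIV. Gm k l * u l) \<le> sqrt A * sqrt B"
    unfolding u_def A_def B_def
    using sqrt_cs[of "Gm k" v \<psi>] Gnn vpos psi by (simp add: less_imp_le)
  have "(\<Sum>l\<in>UNIV. Gm k l * H l) \<le> (\<Sum>l\<in>UNIV. Gm k l * (m * u l))"
    by (intro sum_mono mult_left_mono Hl) (simp add: Gnn)
  also have "\<dots> = m * (\<Sum>l\<in>UNIV. Gm k l * u l)" by (simp add: sum_distrib_left mult_ac)
  also have "\<dots> \<le> m * (sqrt A * sqrt B)" using cs m0 by (simp add: mult_left_mono)
  also have "\<dots> \<le> m * (sqrt A * sqrt (\<psi> k))"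
    using Bp m0 A0 by (intro mult_left_mono) (simp_all add: mult_left_mono)
  finally have sH: "(\<Sum>l\<in>UNIV. Gm k l * H l) \<le> m * (sqrt A * sqrt (\<psi> k))" .
  define sv where "sv = sqrt (v k)"
  define sp where "sp = sqrt (\<psi> k)"
  define \<epsilon> where "\<epsilon> = \<eta> * (G k)^2"
  define w where "w = sqrt (v k - \<epsilon>)"
  have Gk: "0 < G k" using Gpos by simp
  have vA: "v k - \<epsilon> = (G k)^2 * A"
    using veq[rule_format, of k] Gk unfolding A_def \<epsilon>_def by (simp add: field_simps)
  have GA: "G k * sqrt A = w"
    unfolding w_def vA using Gk A0 by (simp add: real_sqrt_mult)
  have sv0: "0 < sv" unfolding sv_def using vpos by simp
  have sp0: "0 < sp" unfolding sp_def using psi by simp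
  have eps0: "0 < \<epsilon>" unfolding \<epsilon>_def using eta Gk by simp
  have vme: "0 \<le> v k - \<epsilon>" unfolding vA using A0 by simp
  have w0: "0 \<le> w" unfolding w_def using vme by simp
  have sqd: "sv^2 - w^2 = \<epsilon>" unfolding sv_def w_def using vpos[rule_format, of k] vme by simp
  have wle: "w \<le> sv" using sqd eps0 w0 sv0
    by (metis abs_of_nonneg diff_gt_0_iff_gt less_imp_le power2_le_imp_le real_le_rsqrt sv_def)
  have Hk: "H k = m * (sv * sp)" using k upos[of k] vpos[rule_format, of k] psi[rule_format, of k] unfolding u_def sv_def sp_def
    by (simp add: real_sqrt_mult)
  have "m * (sv * sp) \<le> G k * (\<eta> + m * (sqrt A * sp))"
    using Hle[rule_format, of k] sH Hk Gk unfolding sp_def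
    by (smt (verit) mult_left_mono)
  also have "\<dots> = G k * \<eta> + m * sp * w" using GA by (simp add: algebra_simps)
  finally have "m * sp * (sv - w) \<le> G k * \<eta>" by (simp add: algebra_simps)
  then have "m * sp * (sv - w) * (sv + w) \<le> G k * \<eta> * (sv + w)"
    using sv0 w0 by (intro mult_right_mono) auto
  moreover have "m * sp * (sv - w) * (sv + w) = m * sp * \<epsilon>"
    using sqd by (simp add: algebra_simps power2_eq_square)
  moreover have "G k * \<eta> * (sv + w) \<le> G k * \<eta> * (2 * sv)"
    using wle Gk eta by (intro mult_left_mono) auto
  ultimately have "m * sp * \<epsilon> \<le> G k * \<eta> * (2 * sv)" by linarith
  then have "(m * sp * G k) * (\<eta> * G k) \<le> (2 * sv) * (\<eta> * G k)"
    unfolding \<epsilon>_def by (simp add: power2_eq_square mult_ac)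
  then have "m * sp * G k \<le> 2 * sv" using eta Gk by simp
  then have mle: "m \<le> 2 * sqrt (v k / \<psi> k) / G k"
    using sp0 Gk unfolding sv_def sp_def by (simp add: real_sqrt_divide field_simps)
  have "H l \<le> m * u l" by (rule Hl)
  also have "\<dots> \<le> (2 * sqrt (v k / \<psi> k) / G k) * u l" using mle upos[of l] by (intro mult_right_mono) auto
  also have "\<dots> \<le> (\<Sum>k\<in>UNIV. 2 * sqrt (v k / \<psi> k) / G k) * u l"
  proof (intro mult_right_mono member_le_sum)
    show "0 \<le> u l" using upos[of l] by simp
    fix i show "0 \<le> 2 * sqrt (v i / \<psi> i) / G i" using vpos psi Gpos by (simp add: less_imp_le)
  qed auto
  finally show ?thesis unfolding u_def .
qed



lemma qve_basic:
  fixes Gm :: "'k::finite \<Rightarrow> 'k \<Rightarrow> real" and gv :: "'k \<Rightarrow> complex" and \<eta> :: real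
  assumes eq: "\<forall>k. 1 = Complex 1 (-\<eta>) * gv k - gv k * (\<Sum>l\<in>UNIV. complex_of_real (Gm k l) * (gv l - 1))"
  shows "gv k \<noteq> 0"
    and "inverse (gv k) = Complex 1 (-\<eta>) - (\<Sum>l\<in>UNIV. complex_of_real (Gm k l) * (gv l - 1))"
    and "Im (gv k) / (cmod (gv k))^2 = \<eta> + (\<Sum>l\<in>UNIV. Gm k l * Im (gv l))"
    and "gv k - 1 = gv k * (Complex 0 \<eta> + (\<Sum>l\<in>UNIV. complex_of_real (Gm k l) * (gv l - 1)))"
proof -
  define T where "T = (\<Sum>l\<in>UNIV. complex_of_real (Gm k l) * (gv l - 1))"
  define z where "z = Complex 1 (-\<eta>)"
  have e0: "1 = z * gv k - gv k * T" using eq unfolding T_def z_def by blast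
  have e1: "gv k * (z - T) = 1" unfolding e0 by (simp only: right_diff_distrib mult.commute)
  then show gnz: "gv k \<noteq> 0" by auto
  have inv: "inverse (gv k) = z - T" using e1 by (rule inverse_unique)
  then show "inverse (gv k) = Complex 1 (-\<eta>) - (\<Sum>l\<in>UNIV. complex_of_real (Gm k l) * (gv l - 1))"
    unfolding T_def z_def .
  have i1: "Im (inverse (gv k)) = - Im (gv k) / (cmod (gv k))^2"
    by (simp only: inverse_complex.sel(2) cmod_power2 minus_divide_left)
  have i2: "Im (z - T) = - \<eta> - (\<Sum>l\<in>UNIV. Gm k l * Im (gv l))"
    unfolding T_def z_def by (simp add: Im_sum)
  show "Im (gv k) / (cmod (gv k))^2 = \<eta> + (\<Sum>l\<in>UNIV. Gm k l * Im (gv l))"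
    using i1 i2 inv by simp
  have "gv k - 1 = gv k * (1 - inverse (gv k))" using gnz by (simp add: right_diff_distrib)
  also have "1 - inverse (gv k) = Complex 0 \<eta> + T" unfolding inv z_def by (simp add: complex_eq_iff)
  finally show "gv k - 1 = gv k * (Complex 0 \<eta> + (\<Sum>l\<in>UNIV. complex_of_real (Gm k l) * (gv l - 1)))"
    unfolding T_def .
qed
lemma qve_hle:
  fixes Gm :: "'k::finite \<Rightarrow> 'k \<Rightarrow> real" and gv :: "'k \<Rightarrow> complex" and \<eta> :: real
  assumes eq: "\<forall>k. 1 = Complex 1 (-\<eta>) * gv k - gv k * (\<Sum>l\<in>UNIV. complex_of_real (Gm k l) * (gv l - 1))"
    and eta: "0 \<le> \<eta>" and Gnn: "\<forall>k l. 0 \<le> Gm k l"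
  shows "cmod (gv k - 1) \<le> cmod (gv k) * (\<eta> + (\<Sum>l\<in>UNIV. Gm k l * cmod (gv l - 1)))"
proof -
  define X where "X = (\<Sum>l\<in>UNIV. complex_of_real (Gm k l) * (gv l - 1))"
  have a: "cmod (gv k - 1) = cmod (gv k) * cmod (Complex 0 \<eta> + X)"
    using qve_basic(4)[OF eq, of k] unfolding X_def by (metis norm_mult)
  have b: "cmod (Complex 0 \<eta> + X) \<le> cmod (Complex 0 \<eta>) + cmod X"
    by (rule norm_triangle_ineq)
  have c: "cmod X \<le> (\<Sum>l\<in>UNIV. cmod (complex_of_real (Gm k l) * (gv l - 1)))"
    unfolding X_def by (rule norm_sum)
  have d: "(\<Sum>l\<in>UNIV. cmod (complex_of_real (Gm k l) * (gv l - 1))) = (\<Sum>l\<in>UNIV. Gm k l * cmod (gv l - 1))"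
    by (intro sum.cong refl) (simp add: norm_mult Gnn)
  have e: "cmod (Complex 0 \<eta>) = \<eta>" using eta by (simp add: cmod_def)
  have "cmod (Complex 0 \<eta> + X) \<le> \<eta> + (\<Sum>l\<in>UNIV. Gm k l * cmod (gv l - 1))"
    using b c d e by linarith
  then show ?thesis unfolding a by (intro mult_left_mono) auto
qed

lemma antisym_sum_zero:
  fixes D :: "'k::finite \<Rightarrow> 'k \<Rightarrow> real"
  assumes "\<forall>k l. D l k = - D k l"
  shows "(\<Sum>k\<in>UNIV. \<Sum>l\<in>UNIV. D k l) = 0"
proof -
  have "(\<Sum>k\<in>UNIV. \<Sum>l\<in>UNIV. D k l) = (\<Sum>l\<in>UNIV. \<Sum>k\<in>UNIV. D k l)" by (rule sum.swap)
  also have "\<dots> = (\<Sum>l\<in>UNIV. \<Sum>k\<in>UNIV. - D l k)"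
  proof (intro sum.cong refl)
    fix l k show "D k l = - D l k" using assms by metis
  qed
  also have "\<dots> = - (\<Sum>l\<in>UNIV. \<Sum>k\<in>UNIV. D l k)" by (simp add: sum_negf)
  finally show ?thesis by simp
qed

lemma Im_ofr_mult: "Im (complex_of_real r * z) = r * Im z" by simp

lemma Im_plus2: "Im (a + b) = Im a + Im b" by simp

lemma Im_cnj_mult: "Im (cnj a * b) = Re a * Im b - Im a * Re b"
  by simp

lemma qve_Q:
  fixes s :: "'k::finite \<Rightarrow> 'k \<Rightarrow> real" and r :: "'k \<Rightarrow> real" and gv :: "'k \<Rightarrow> complex" and \<eta> :: real
  assumes sym: "\<forall>k l. s k l = s l k"
    and eq: "\<forall>k. 1 = Complex 1 (-\<eta>) * gv k - gv k * (\<Sum>l\<in>UNIV. complex_of_real (s k l * r l) * (gv l - 1))"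
  shows "(\<Sum>k\<in>UNIV. r k * (cmod (gv k - 1))^2 * Im (gv k) / (cmod (gv k))^2) = \<eta> * (\<Sum>k\<in>UNIV. r k * (1 - Re (gv k)))"
proof -
  define h where "h k = gv k - 1" for k
  define T where "T k = (\<Sum>l\<in>UNIV. complex_of_real (s k l * r l) * h l)" for k
  have hT: "h k * inverse (gv k) = Complex 0 \<eta> + T k" for k
  proof -
    have "h k = gv k * (Complex 0 \<eta> + T k)" using qve_basic(4)[OF eq, of k] unfolding h_def T_def .
    then have "h k * inverse (gv k) = (gv k * inverse (gv k)) * (Complex 0 \<eta> + T k)"
      by (simp only: mult.commute mult.left_commute)
    then show ?thesis using qve_basic(1)[OF eq, of k] by simp
  qed
  have lhs: "Im (complex_of_real (r k) * cnj (h k) * (h k * inverse (gv k)))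
      = - (r k * (cmod (gv k - 1))^2 * Im (gv k) / (cmod (gv k))^2)" for k
  proof -
    have "complex_of_real (r k) * cnj (h k) * (h k * inverse (gv k))
        = complex_of_real (r k) * (h k * cnj (h k)) * inverse (gv k)"
      by (simp only: mult.commute mult.left_commute mult.assoc)
    also have "\<dots> = complex_of_real (r k * (cmod (h k))^2) * inverse (gv k)"
      by (simp only: complex_norm_square[symmetric] of_real_mult)
    finally have "Im (complex_of_real (r k) * cnj (h k) * (h k * inverse (gv k)))
       = (r k * (cmod (h k))^2) * Im (inverse (gv k))" by (simp only: Im_ofr_mult Im_complex_of_real)
    also have "Im (inverse (gv k)) = - Im (gv k) / (cmod (gv k))^2"
      by (simp only: inverse_complex.sel(2) cmod_power2 minus_divide_left)
    finally show ?thesis unfolding h_def by simp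
  qed
  have rhs1: "Im (complex_of_real (r k) * cnj (h k) * Complex 0 \<eta>) = \<eta> * (r k * (Re (gv k) - 1))" for k
    unfolding h_def by simp
  define D where "D k l = s k l * r k * r l * (Re (h k) * Im (h l) - Im (h k) * Re (h l))" for k l
  have Dan: "\<forall>k l. D l k = - D k l"
  proof (intro allI)
    fix k l
    have "s l k = s k l" using sym by metis
    then show "D l k = - D k l" unfolding D_def by (simp add: algebra_simps)
  qed
  have rhs2: "Im (complex_of_real (r k) * cnj (h k) * T k) = (\<Sum>l\<in>UNIV. D k l)" for k
  proof -
    have "complex_of_real (r k) * cnj (h k) * T k = (\<Sum>l\<in>UNIV. complex_of_real (s k l * r k * r l) * (cnj (h k) * h l))"
      unfolding T_def by (simp add: sum_distrib_left mult_ac)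
    then show ?thesis unfolding D_def by (simp only: Im_sum Im_ofr_mult Im_complex_of_real Im_cnj_mult)
  qed
  have "(\<Sum>k\<in>UNIV. Im (complex_of_real (r k) * cnj (h k) * (h k * inverse (gv k))))
      = (\<Sum>k\<in>UNIV. \<eta> * (r k * (Re (gv k) - 1))) + (\<Sum>k\<in>UNIV. \<Sum>l\<in>UNIV. D k l)"
    unfolding hT distrib_left Im_plus2 rhs1 rhs2 sum.distrib ..
  then have "- (\<Sum>k\<in>UNIV. r k * (cmod (gv k - 1))^2 * Im (gv k) / (cmod (gv k))^2)
      = \<eta> * (\<Sum>k\<in>UNIV. r k * (Re (gv k) - 1))"
    unfolding lhs antisym_sum_zero[OF Dan] by (simp add: sum_negf sum_distrib_left)
  moreover have "(\<Sum>k\<in>UNIV. r k * (Re (gv k) - 1)) = - (\<Sum>k\<in>UNIV. r k * (1 - Re (gv k)))"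
    by (simp add: sum_negf[symmetric] algebra_simps)
  ultimately show ?thesis by simp
qed


theorem mainTheorem5:
  fixes \<rho> :: "real ^ 'k"
    and S :: "real ^ 'k ^ 'k"
    and g :: "complex \<Rightarrow> complex ^ 'k"
  assumes rho_pos: "\<forall>k. 0 < \<rho> $ k \<and> \<rho> $ k < 1"
    and rho_sum: "(\<Sum>k\<in>UNIV. \<rho> $ k) = 1"
    and S_sym: "transpose S = S"
    and S_pos: "\<forall>k l. 0 < S $ k $ l"
    and g_QVE: "\<forall>z. Im z < 0 \<longrightarrow> (\<forall>k. 0 < Im (g z $ k)) \<and> QVE S \<rho> z (g z)"
    and g_cont: "continuous_on ({z. Im z < 0} \<union> \<real>) g"
  shows "(largest_eigenvalue (Omega_K S \<rho>) \<le> 1 \<longrightarrow> g 1 = 1)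
       \<and> (largest_eigenvalue (Omega_K S \<rho>) > 1 \<longrightarrow> g 1 \<noteq> 1)"
proof -
  define r where "r k = \<rho>$k" for k
  define s where "s k l = S$k$l" for k l
  define Gm where "Gm k l = s k l * r l" for k l
  define \<mu> where "\<mu> = largest_eigenvalue (Omega_K S \<rho>)"
  have rpos: "\<forall>k. 0 < r k" using rho_pos unfolding r_def by simp
  have spos: "\<forall>k l. 0 < s k l" using S_pos unfolding s_def by simp
  have ssym: "\<forall>k l. s k l = s l k"
  proof (intro allI)
    fix k l
    have "S$k$l = (transpose S)$k$l" using S_sym by simp
    also have "\<dots> = S$l$k" by (simp add: transpose_def)
    finally show "s k l = s l k" unfolding s_def .
  qed
  have Gpos: "\<forall>k l. 0 < Gm k l" unfolding Gm_def using rpos spos by simp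
  have Gnn: "\<forall>k l. 0 \<le> Gm k l" using Gpos by (simp add: less_imp_le)
  have Osym: "\<And>i j. Omega_K S \<rho> $ i $ j = Omega_K S \<rho> $ j $ i"
    unfolding omega_entry using ssym unfolding s_def by (simp add: mult_ac)
  have Opos: "\<And>i j. 0 < Omega_K S \<rho> $ i $ j"
    unfolding omega_entry using rpos spos unfolding r_def s_def by simp
  obtain e where e_nz: "e \<noteq> 0" and e_nn: "\<forall>i. 0 \<le> e$i"
    and e_eig: "Omega_K S \<rho> *v e = \<mu> *s e"
    using sym_pos_top_eig[OF Osym Opos] unfolding \<mu>_def by blast
  define \<phi> where "\<phi> l = e$l / sqrt (r l)" for l
  have phi_eig: "\<forall>k. (\<Sum>l\<in>UNIV. Gm k l * \<phi> l) = \<mu> * \<phi> k"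
  proof
    fix k
    have "(Omega_K S \<rho> *v e) $ k = \<mu> * e$k" using e_eig by simp
    then have E: "(\<Sum>l\<in>UNIV. sqrt (r k) * s k l * sqrt (r l) * e$l) = \<mu> * e$k"
      unfolding matrix_vector_mult_def omega_entry r_def s_def by simp
    have "(\<Sum>l\<in>UNIV. Gm k l * \<phi> l) = (\<Sum>l\<in>UNIV. s k l * sqrt (r l) * e$l)"
    proof (intro sum.cong refl)
      fix l
      have "r l / sqrt (r l) = sqrt (r l)" using rpos by (simp add: real_div_sqrt less_imp_le)
      then show "Gm k l * \<phi> l = s k l * sqrt (r l) * e$l"
        unfolding Gm_def \<phi>_def by (metis times_divide_eq_right times_divide_eq_left mult.assoc mult.commute)
    qed
    also have "\<dots> = (\<Sum>l\<in>UNIV. sqrt (r k) * s k l * sqrt (r l) * e$l) / sqrt (r k)"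
      using rpos[rule_format, of k] by (simp add: sum_divide_distrib mult.assoc)
    also have "\<dots> = \<mu> * \<phi> k" unfolding E \<phi>_def by simp
    finally show "(\<Sum>l\<in>UNIV. Gm k l * \<phi> l) = \<mu> * \<phi> k" .
  qed
  obtain l0 where l0: "e$l0 \<noteq> 0" using e_nz by (metis vec_eq_iff zero_index)
  have phi_l0: "\<phi> l0 \<noteq> 0" using l0 rpos[rule_format, of l0] unfolding \<phi>_def by simp
  have phi_nn: "\<forall>l. 0 \<le> \<phi> l"
  proof
    fix l show "0 \<le> \<phi> l" using e_nn rpos[rule_format, of l] unfolding \<phi>_def by simp
  qed

  define Z where "Z \<eta> = Complex 1 (-\<eta>)" for \<eta>
  define gg where "gg \<eta> = g (Z \<eta>)" for \<eta>
  define F where "F = at_right (0::real)"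
  have Fnt: "F \<noteq> bot" unfolding F_def by simp
  have ev0: "\<forall>\<^sub>F \<eta> in F. 0 < \<eta>" unfolding F_def by (rule eventually_at_right_less)
  have evQ: "\<forall>\<^sub>F \<eta> in F. 0 < \<eta> \<and> (\<forall>k. 0 < Im (gg \<eta> $ k)) \<and>
      (\<forall>k. 1 = Complex 1 (-\<eta>) * gg \<eta> $ k - gg \<eta> $ k * (\<Sum>l\<in>UNIV. complex_of_real (Gm k l) * (gg \<eta> $ l - 1)))"
    using ev0
  proof (rule eventually_mono)
    fix \<eta> :: real assume h: "0 < \<eta>"
    have "Im (Z \<eta>) < 0" unfolding Z_def using h by simp
    then have "(\<forall>k. 0 < Im (g (Z \<eta>) $ k)) \<and> QVE S \<rho> (Z \<eta>) (g (Z \<eta>))" using g_QVE by blast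
    then show "0 < \<eta> \<and> (\<forall>k. 0 < Im (gg \<eta> $ k)) \<and>
      (\<forall>k. 1 = Complex 1 (-\<eta>) * gg \<eta> $ k - gg \<eta> $ k * (\<Sum>l\<in>UNIV. complex_of_real (Gm k l) * (gg \<eta> $ l - 1)))"
      using h QVE_comp unfolding gg_def Z_def Gm_def s_def r_def by blast
  qed
  have Zlim: "(Z \<longlongrightarrow> 1) F"
  proof -
    have "((\<lambda>\<eta>. Complex 1 (-\<eta>)) \<longlongrightarrow> Complex 1 (-0)) F"
      unfolding F_def by (intro tendsto_Complex tendsto_const tendsto_minus tendsto_ident_at)
    moreover have c1: "Complex 1 (-0) = (1::complex)" by (simp add: complex_eq_iff)
    ultimately show ?thesis unfolding Z_def by simp
  qed
  have glim: "(gg \<longlongrightarrow> g 1) F"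
  proof -
    have "\<forall>\<^sub>F \<eta> in F. Z \<eta> \<in> {z. Im z < 0} \<union> \<real>"
      using ev0 by (rule eventually_mono) (simp add: Z_def)
    then have "((\<lambda>\<eta>. g (Z \<eta>)) \<longlongrightarrow> g 1) F"
      by (intro continuous_on_tendsto_compose[OF g_cont Zlim]) auto
    then show ?thesis unfolding gg_def .
  qed
  define g0 where "g0 k = g 1 $ k" for k
  have clim: "((\<lambda>\<eta>. gg \<eta> $ k) \<longlongrightarrow> g0 k) F" for k
    unfolding g0_def using glim by (rule tendsto_vec_nth)
  have eqk: "\<forall>\<^sub>F \<eta> in F. 1 = Complex 1 (-\<eta>) * gg \<eta> $ k - gg \<eta> $ k * (\<Sum>l\<in>UNIV. complex_of_real (Gm k l) * (gg \<eta> $ l - 1))" for k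
    using evQ by (rule eventually_mono) blast
  have eq0: "1 = g0 k - g0 k * (\<Sum>l\<in>UNIV. complex_of_real (Gm k l) * (g0 l - 1))" for k
  proof -
    have "((\<lambda>\<eta>. Z \<eta> * gg \<eta> $ k - gg \<eta> $ k * (\<Sum>l\<in>UNIV. complex_of_real (Gm k l) * (gg \<eta> $ l - 1)))
        \<longlongrightarrow> 1 * g0 k - g0 k * (\<Sum>l\<in>UNIV. complex_of_real (Gm k l) * (g0 l - 1))) F"
      by (intro tendsto_intros Zlim clim)
    then have "((\<lambda>\<eta>. 1) \<longlongrightarrow> 1 * g0 k - g0 k * (\<Sum>l\<in>UNIV. complex_of_real (Gm k l) * (g0 l - 1))) F"
    proof (rule Lim_transform_eventually)
      show "\<forall>\<^sub>F \<eta> in F. Z \<eta> * gg \<eta> $ k - gg \<eta> $ k * (\<Sum>l\<in>UNIV. complex_of_real (Gm k l) * (gg \<eta> $ l - 1)) = 1"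
        using eqk[of k] by (rule eventually_mono) (simp only: Z_def HOL.sym)
    qed
    then show ?thesis using Fnt by (simp add: tendsto_const_iff)
  qed
  have g0nz: "g0 k \<noteq> 0" for k using eq0[of k] by auto
  have cm0: "0 < cmod (g0 k)" for k using g0nz by simp
  have Imlim: "((\<lambda>\<eta>. Im (gg \<eta> $ k)) \<longlongrightarrow> Im (g0 k)) F" for k by (intro tendsto_intros clim)
  have cmlim: "((\<lambda>\<eta>. cmod (gg \<eta> $ k)) \<longlongrightarrow> cmod (g0 k)) F" for k by (intro tendsto_intros clim)
  have hlim: "((\<lambda>\<eta>. cmod (gg \<eta> $ k - 1)) \<longlongrightarrow> cmod (g0 k - 1)) F" for k by (intro tendsto_intros clim)
  have Im0: "0 \<le> Im (g0 k)" for k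
  proof (rule tendsto_lowerbound[OF Imlim _ Fnt])
    show "\<forall>\<^sub>F \<eta> in F. 0 \<le> Im (gg \<eta> $ k)" using evQ by (rule eventually_mono) (simp add: less_imp_le)
  qed
  have evB: "\<forall>\<^sub>F \<eta> in F. 0 < \<eta> \<and> (\<forall>k. 0 < Im (gg \<eta> $ k)) \<and> (\<forall>k. 0 < cmod (gg \<eta> $ k)) \<and>
      (\<forall>k. Im (gg \<eta> $ k) / (cmod (gg \<eta> $ k))^2 = \<eta> + (\<Sum>l\<in>UNIV. Gm k l * Im (gg \<eta> $ l))) \<and>
      (\<forall>k. cmod (gg \<eta> $ k - 1) \<le> cmod (gg \<eta> $ k) * (\<eta> + (\<Sum>l\<in>UNIV. Gm k l * cmod (gg \<eta> $ l - 1))))"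
    using evQ
  proof (rule eventually_mono)
    fix \<eta> :: real
    assume h: "0 < \<eta> \<and> (\<forall>k. 0 < Im (gg \<eta> $ k)) \<and>
      (\<forall>k. 1 = Complex 1 (-\<eta>) * gg \<eta> $ k - gg \<eta> $ k * (\<Sum>l\<in>UNIV. complex_of_real (Gm k l) * (gg \<eta> $ l - 1)))"
    define gv where "gv k = gg \<eta> $ k" for k
    have eq: "\<forall>k. 1 = Complex 1 (-\<eta>) * gv k - gv k * (\<Sum>l\<in>UNIV. complex_of_real (Gm k l) * (gv l - 1))"
      using h unfolding gv_def by blast
    have "\<forall>k. 0 < cmod (gv k)" using qve_basic(1)[OF eq] by simp
    moreover have "\<forall>k. Im (gv k) / (cmod (gv k))^2 = \<eta> + (\<Sum>l\<in>UNIV. Gm k l * Im (gv l))"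
      using qve_basic(3)[OF eq] by blast
    moreover have "\<forall>k. cmod (gv k - 1) \<le> cmod (gv k) * (\<eta> + (\<Sum>l\<in>UNIV. Gm k l * cmod (gv l - 1)))"
      using qve_hle[OF eq _ Gnn] h by (simp add: less_imp_le)
    ultimately show "0 < \<eta> \<and> (\<forall>k. 0 < Im (gg \<eta> $ k)) \<and> (\<forall>k. 0 < cmod (gg \<eta> $ k)) \<and>
      (\<forall>k. Im (gg \<eta> $ k) / (cmod (gg \<eta> $ k))^2 = \<eta> + (\<Sum>l\<in>UNIV. Gm k l * Im (gg \<eta> $ l))) \<and>
      (\<forall>k. cmod (gg \<eta> $ k - 1) \<le> cmod (gg \<eta> $ k) * (\<eta> + (\<Sum>l\<in>UNIV. Gm k l * cmod (gg \<eta> $ l - 1))))"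
      using h unfolding gv_def by blast
  qed

  have part1: "g 1 = 1" if mu1: "\<mu> \<le> 1"
  proof -
    have psub: "\<forall>k. (\<Sum>l\<in>UNIV. Gm k l * \<phi> l) \<le> \<phi> k"
    proof
      fix k
      have "\<mu> * \<phi> k \<le> 1 * \<phi> k" using mu1 phi_nn by (intro mult_right_mono) auto
      then show "(\<Sum>l\<in>UNIV. Gm k l * \<phi> l) \<le> \<phi> k" using phi_eig by simp
    qed
    have psi: "\<forall>k. 0 < \<phi> k"
    proof
      fix k
      have p0: "0 < \<phi> l0" using phi_l0 phi_nn by (simp add: order_le_neq_trans)
      have "Gm k l0 * \<phi> l0 \<le> (\<Sum>l\<in>UNIV. Gm k l * \<phi> l)"
        by (rule member_le_sum) (use Gnn phi_nn in auto)
      moreover have "0 < Gm k l0 * \<phi> l0" using Gpos p0 by simp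
      ultimately have "0 < \<mu> * \<phi> k" using phi_eig by simp
      then show "0 < \<phi> k" using phi_nn
        by (metis less_eq_real_def mult_zero_right order_less_irrefl)
    qed
    have all1: "g0 k = 1" for k
    proof (cases "\<forall>j. Im (g0 j) = 0")
      case True
      have ev: "\<forall>\<^sub>F \<eta> in F. cmod (gg \<eta> $ k - 1) \<le>
          (\<Sum>i\<in>UNIV. 2 * sqrt (Im (gg \<eta> $ i) / \<phi> i) / cmod (gg \<eta> $ i)) * sqrt (Im (gg \<eta> $ k) * \<phi> k)"
        using evB
      proof (rule eventually_mono)
        fix \<eta> assume h: "0 < \<eta> \<and> (\<forall>k. 0 < Im (gg \<eta> $ k)) \<and> (\<forall>k. 0 < cmod (gg \<eta> $ k)) \<and>
          (\<forall>k. Im (gg \<eta> $ k) / (cmod (gg \<eta> $ k))^2 = \<eta> + (\<Sum>l\<in>UNIV. Gm k l * Im (gg \<eta> $ l))) \<and>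
          (\<forall>k. cmod (gg \<eta> $ k - 1) \<le> cmod (gg \<eta> $ k) * (\<eta> + (\<Sum>l\<in>UNIV. Gm k l * cmod (gg \<eta> $ l - 1))))"
        show "cmod (gg \<eta> $ k - 1) \<le>
          (\<Sum>i\<in>UNIV. 2 * sqrt (Im (gg \<eta> $ i) / \<phi> i) / cmod (gg \<eta> $ i)) * sqrt (Im (gg \<eta> $ k) * \<phi> k)"
          using rowsum_real[of Gm \<phi> "\<lambda>i. Im (gg \<eta> $ i)" "\<lambda>i. cmod (gg \<eta> $ i)" \<eta> "\<lambda>i. cmod (gg \<eta> $ i - 1)" k]
            Gnn psi psub h by simp
      qed
      have lim: "((\<lambda>\<eta>. (\<Sum>i\<in>UNIV. 2 * sqrt (Im (gg \<eta> $ i) / \<phi> i) / cmod (gg \<eta> $ i)) * sqrt (Im (gg \<eta> $ k) * \<phi> k))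
          \<longlongrightarrow> (\<Sum>i\<in>UNIV. 2 * sqrt (Im (g0 i) / \<phi> i) / cmod (g0 i)) * sqrt (Im (g0 k) * \<phi> k)) F"
        by (intro tendsto_intros clim) (use cm0 psi in \<open>auto simp: less_imp_neq[symmetric]\<close>)
      have "cmod (g0 k - 1) \<le> (\<Sum>i\<in>UNIV. 2 * sqrt (Im (g0 i) / \<phi> i) / cmod (g0 i)) * sqrt (Im (g0 k) * \<phi> k)"
        by (rule tendsto_le[OF Fnt lim hlim ev])
      then have "cmod (g0 k - 1) \<le> 0" using True by simp
      then show ?thesis by simp
    next
      case False
      then obtain j where j: "Im (g0 j) \<noteq> 0" by blast
      have jpos: "0 < Im (g0 j)" using j Im0[of j] by simp
      have Impos: "0 < Im (g0 i)" for i
      proof -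
        have ev: "\<forall>\<^sub>F \<eta> in F. (cmod (gg \<eta> $ i))^2 * (Gm i j * Im (gg \<eta> $ j)) \<le> Im (gg \<eta> $ i)"
          using evB
        proof (rule eventually_mono)
          fix \<eta> assume h: "0 < \<eta> \<and> (\<forall>k. 0 < Im (gg \<eta> $ k)) \<and> (\<forall>k. 0 < cmod (gg \<eta> $ k)) \<and>
            (\<forall>k. Im (gg \<eta> $ k) / (cmod (gg \<eta> $ k))^2 = \<eta> + (\<Sum>l\<in>UNIV. Gm k l * Im (gg \<eta> $ l))) \<and>
            (\<forall>k. cmod (gg \<eta> $ k - 1) \<le> cmod (gg \<eta> $ k) * (\<eta> + (\<Sum>l\<in>UNIV. Gm k l * cmod (gg \<eta> $ l - 1))))"
          have "Gm i j * Im (gg \<eta> $ j) \<le> (\<Sum>l\<in>UNIV. Gm i l * Im (gg \<eta> $ l))"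
          proof (rule member_le_sum)
            fix x show "0 \<le> Gm i x * Im (gg \<eta> $ x)"
              using Gnn[rule_format, of i x] h by (simp add: less_imp_le)
          qed auto
          also have "\<dots> \<le> Im (gg \<eta> $ i) / (cmod (gg \<eta> $ i))^2" using h by simp
          finally have "Gm i j * Im (gg \<eta> $ j) \<le> Im (gg \<eta> $ i) / (cmod (gg \<eta> $ i))^2" .
          moreover have c2: "0 < (cmod (gg \<eta> $ i))^2" using h by simp
          ultimately have "Gm i j * Im (gg \<eta> $ j) * (cmod (gg \<eta> $ i))^2 \<le> Im (gg \<eta> $ i)"
            by (simp only: pos_le_divide_eq)
          then show "(cmod (gg \<eta> $ i))^2 * (Gm i j * Im (gg \<eta> $ j)) \<le> Im (gg \<eta> $ i)"
            by (simp only: mult.commute)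
        qed
        have "(cmod (g0 i))^2 * (Gm i j * Im (g0 j)) \<le> Im (g0 i)"
          by (rule tendsto_le[OF Fnt Imlim _ ev]) (intro tendsto_intros clim)
        moreover have "0 < (cmod (g0 i))^2 * (Gm i j * Im (g0 j))" using cm0 Gpos jpos by simp
        ultimately show ?thesis by linarith
      qed
      have ev: "\<forall>\<^sub>F \<eta> in F. r k * (cmod (gg \<eta> $ k - 1))^2 * Im (gg \<eta> $ k) / (cmod (gg \<eta> $ k))^2
          \<le> \<eta> * (\<Sum>i\<in>UNIV. r i * (1 - Re (gg \<eta> $ i)))"
        using evQ
      proof (rule eventually_mono)
        fix \<eta> assume h: "0 < \<eta> \<and> (\<forall>k. 0 < Im (gg \<eta> $ k)) \<and>
          (\<forall>k. 1 = Complex 1 (-\<eta>) * gg \<eta> $ k - gg \<eta> $ k * (\<Sum>l\<in>UNIV. complex_of_real (Gm k l) * (gg \<eta> $ l - 1)))"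
        have eq: "\<forall>k. 1 = Complex 1 (-\<eta>) * gg \<eta> $ k - gg \<eta> $ k * (\<Sum>l\<in>UNIV. complex_of_real (s k l * r l) * (gg \<eta> $ l - 1))"
          using h unfolding Gm_def by blast
        have "r k * (cmod (gg \<eta> $ k - 1))^2 * Im (gg \<eta> $ k) / (cmod (gg \<eta> $ k))^2
            \<le> (\<Sum>i\<in>UNIV. r i * (cmod (gg \<eta> $ i - 1))^2 * Im (gg \<eta> $ i) / (cmod (gg \<eta> $ i))^2)"
        proof (rule member_le_sum)
          fix x
          have a1: "0 \<le> r x" using rpos[rule_format, of x] by simp
          have a2: "0 \<le> Im (gg \<eta> $ x)" using h by (simp add: less_imp_le)
          show "0 \<le> r x * (cmod (gg \<eta> $ x - 1))^2 * Im (gg \<eta> $ x) / (cmod (gg \<eta> $ x))^2"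
            using a1 a2 by (intro divide_nonneg_nonneg mult_nonneg_nonneg) auto
        qed auto
        also have "\<dots> = \<eta> * (\<Sum>i\<in>UNIV. r i * (1 - Re (gg \<eta> $ i)))"
          by (rule qve_Q[OF ssym eq])
        finally show "r k * (cmod (gg \<eta> $ k - 1))^2 * Im (gg \<eta> $ k) / (cmod (gg \<eta> $ k))^2
          \<le> \<eta> * (\<Sum>i\<in>UNIV. r i * (1 - Re (gg \<eta> $ i)))" .
      qed
      have lim1: "((\<lambda>\<eta>. r k * (cmod (gg \<eta> $ k - 1))^2 * Im (gg \<eta> $ k) / (cmod (gg \<eta> $ k))^2)
          \<longlongrightarrow> r k * (cmod (g0 k - 1))^2 * Im (g0 k) / (cmod (g0 k))^2) F"
        by (intro tendsto_intros clim) (use cm0 in \<open>auto simp: less_imp_neq[symmetric]\<close>)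
      have lim2: "((\<lambda>\<eta>. \<eta> * (\<Sum>i\<in>UNIV. r i * (1 - Re (gg \<eta> $ i))))
          \<longlongrightarrow> 0 * (\<Sum>i\<in>UNIV. r i * (1 - Re (g0 i)))) F"
        unfolding F_def by (intro tendsto_intros tendsto_ident_at clim[unfolded F_def])
      have "r k * (cmod (g0 k - 1))^2 * Im (g0 k) / (cmod (g0 k))^2 \<le> 0 * (\<Sum>i\<in>UNIV. r i * (1 - Re (g0 i)))"
        by (rule tendsto_le[OF Fnt lim2 lim1 ev])
      then have "r k * (cmod (g0 k - 1))^2 * Im (g0 k) / (cmod (g0 k))^2 \<le> 0" by simp
      moreover have "0 < r k * Im (g0 k) / (cmod (g0 k))^2" using rpos Impos[of k] cm0[of k] by simp
      moreover have "r k * (cmod (g0 k - 1))^2 * Im (g0 k) / (cmod (g0 k))^2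
          = (cmod (g0 k - 1))^2 * (r k * Im (g0 k) / (cmod (g0 k))^2)" by (simp add: mult_ac)
      ultimately have "(cmod (g0 k - 1))^2 * (r k * Im (g0 k) / (cmod (g0 k))^2) \<le> 0 * (r k * Im (g0 k) / (cmod (g0 k))^2)"
        by simp
      then have "(cmod (g0 k - 1))^2 \<le> 0"
        using \<open>0 < r k * Im (g0 k) / (cmod (g0 k))^2\<close> by (rule mult_right_le_imp_le)
      then show ?thesis by simp
    qed
    show "g 1 = 1" using all1 unfolding g0_def by (simp add: vec_eq_iff)
  qed

  have part2: "g 1 \<noteq> 1" if mu1: "1 < \<mu>"
  proof
    assume g1: "g 1 = 1"
    have g01: "g0 k = 1" for k unfolding g0_def g1 by simp
    have evA: "\<forall>\<^sub>F \<eta> in F. \<exists>k. \<bar>\<mu>\<bar> * (cmod (gg \<eta> $ k))^2 \<le> 1"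
      using evB
    proof (rule eventually_mono)
      fix \<eta> assume h: "0 < \<eta> \<and> (\<forall>k. 0 < Im (gg \<eta> $ k)) \<and> (\<forall>k. 0 < cmod (gg \<eta> $ k)) \<and>
        (\<forall>k. Im (gg \<eta> $ k) / (cmod (gg \<eta> $ k))^2 = \<eta> + (\<Sum>l\<in>UNIV. Gm k l * Im (gg \<eta> $ l))) \<and>
        (\<forall>k. cmod (gg \<eta> $ k - 1) \<le> cmod (gg \<eta> $ k) * (\<eta> + (\<Sum>l\<in>UNIV. Gm k l * cmod (gg \<eta> $ l - 1))))"
      have sub: "\<forall>k. (\<Sum>l\<in>UNIV. Gm k l * Im (gg \<eta> $ l)) \<le> Im (gg \<eta> $ k) / (cmod (gg \<eta> $ k))^2"
        using h by (simp add: less_imp_le)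
      show "\<exists>k. \<bar>\<mu>\<bar> * (cmod (gg \<eta> $ k))^2 \<le> 1"
        using rowsum_eig[OF Gnn _ _ sub phi_l0 phi_eig] h by blast
    qed
    have evC: "\<forall>\<^sub>F \<eta> in F. \<forall>k. 1 < \<bar>\<mu>\<bar> * (cmod (gg \<eta> $ k))^2"
    proof (rule eventually_all_finite)
      fix k
      have "((\<lambda>\<eta>. \<bar>\<mu>\<bar> * (cmod (gg \<eta> $ k))^2) \<longlongrightarrow> \<bar>\<mu>\<bar> * (cmod (g0 k))^2) F"
        by (intro tendsto_intros clim)
      moreover have "1 < \<bar>\<mu>\<bar> * (cmod (g0 k))^2" using g01 mu1 by simp
      ultimately show "\<forall>\<^sub>F \<eta> in F. 1 < \<bar>\<mu>\<bar> * (cmod (gg \<eta> $ k))^2" by (rule order_tendstoD(1))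
    qed
    have "\<forall>\<^sub>F \<eta> in F. False"
      using eventually_conj[OF evA evC] by (rule eventually_mono) (meson not_le)
    then show False using Fnt by simp
  qed
  show ?thesis using part1 part2 unfolding \<mu>_def by blast
qed

end
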